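(* Let $P\in\Delta_{\mathcal{T},\mathcal{X},\mathcal{Y}}$ such that under $P$, $T$ is conditionally independent of $X$ given $Y$, and $T$ is conditionally independent of $Y$ given $X$. If there exist $x_0\in\mathcal{X}$, $y_0\in\mathcal{Y}$ with $P(X=x_0,Y=y_0)>0$, $H_P(X\mid Y=y_0)\neq 0$ and $H_P(Y\mid X=x_0)\ne 0$, then $\arg\max_{Q\in\Delta_P}H_Q(T\mid X,Y)$ contains more than one element.
   Context: $T,X,Y$ are random variables with finite state spaces $\mathcal{T},\mathcal{X},\mathcal{Y}$; $\Delta_{\mathcal{T},\mathcal{X},\mathcal{Y}}$ is the set of all joint distributions on $\mathcal{T}\times\mathcal{X}\times\mathcal{Y}$. For $P\in\Delta_{\mathcal{T},\mathcal{X},\mathcal{Y}}$, $\Delta_P=\{Q\in\Delta_{\mathcal{T},\mathcal{X},\mathcal{Y}}: Q(X=x,T=t)=P(X=x,T=t),\ Q(Y=y,T=t)=P(Y=y,T=t)\ \forall x,y,t\}$. $H_P(X\mid Y=y_0)$ is the entropy of the conditional distribution of $X$ given $Y=y_0$ under $P$; $H_Q(T\mid X,Y)$ the conditional entropy under $Q$. *)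

theory Defs
  imports "HOL-Analysis.Analysis"
begin

type_synonym ('t,'x,'y) jdist = "'t \<times> 'x \<times> 'y \<Rightarrow> real"

definition is_dist :: "('t::finite,'x::finite,'y::finite) jdist \<Rightarrow> bool" where
  "is_dist P \<longleftrightarrow> (\<forall>z. 0 \<le> P z) \<and> (\<Sum>z\<in>UNIV. P z) = 1"

definition pXY :: "('t::finite,'x,'y) jdist \<Rightarrow> 'x \<Rightarrow> 'y \<Rightarrow> real" where
  "pXY P x y = (\<Sum>t\<in>UNIV. P (t,x,y))"
definition pTX :: "('t,'x,'y::finite) jdist \<Rightarrow> 't \<Rightarrow> 'x \<Rightarrow> real" where
  "pTX P t x = (\<Sum>y\<in>UNIV. P (t,x,y))"
definition pTY :: "('t,'x::finite,'y) jdist \<Rightarrow> 't \<Rightarrow> 'y \<Rightarrow> real" where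
  "pTY P t y = (\<Sum>x\<in>UNIV. P (t,x,y))"
definition pX :: "('t::finite,'x,'y::finite) jdist \<Rightarrow> 'x \<Rightarrow> real" where
  "pX P x = (\<Sum>t\<in>UNIV. \<Sum>y\<in>UNIV. P (t,x,y))"
definition pY :: "('t::finite,'x::finite,'y) jdist \<Rightarrow> 'y \<Rightarrow> real" where
  "pY P y = (\<Sum>t\<in>UNIV. \<Sum>x\<in>UNIV. P (t,x,y))"

definition cond_indep_T_X_given_Y :: "('t::finite,'x::finite,'y::finite) jdist \<Rightarrow> bool" where
  "cond_indep_T_X_given_Y P \<longleftrightarrow>
     (\<forall>t x y. P (t,x,y) * pY P y = pTY P t y * pXY P x y)"

definition cond_indep_T_Y_given_X :: "('t::finite,'x::finite,'y::finite) jdist \<Rightarrow> bool" where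
  "cond_indep_T_Y_given_X P \<longleftrightarrow>
     (\<forall>t x y. P (t,x,y) * pX P x = pTX P t x * pXY P x y)"

text \<open>Shannon entropy of a finite pmf (natural log; base is irrelevant here), with 0 log 0 = 0.\<close>
definition entropy_fn :: "('a::finite \<Rightarrow> real) \<Rightarrow> real" where
  "entropy_fn p = - (\<Sum>a\<in>UNIV. if p a > 0 then p a * ln (p a) else 0)"

definition condH_X_given_Y_eq :: "('t::finite,'x::finite,'y::finite) jdist \<Rightarrow> 'y \<Rightarrow> real" where
  "condH_X_given_Y_eq P y0 = entropy_fn (\<lambda>x. pXY P x y0 / pY P y0)"

definition condH_Y_given_X_eq :: "('t::finite,'x::finite,'y::finite) jdist \<Rightarrow> 'x \<Rightarrow> real" where
  "condH_Y_given_X_eq P x0 = entropy_fn (\<lambda>y. pXY P x0 y / pX P x0)"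

definition condH_T_given_XY :: "('t::finite,'x::finite,'y::finite) jdist \<Rightarrow> real" where
  "condH_T_given_XY Q = - (\<Sum>(t,x,y)\<in>UNIV.
      if Q (t,x,y) > 0 then Q (t,x,y) * ln (Q (t,x,y) / pXY Q x y) else 0)"

definition Delta_P :: "('t::finite,'x::finite,'y::finite) jdist \<Rightarrow> ('t,'x,'y) jdist set" where
  "Delta_P P = {Q. is_dist Q \<and> (\<forall>t x. pTX Q t x = pTX P t x) \<and> (\<forall>t y. pTY Q t y = pTY P t y)}"

definition argmax_condH :: "('t::finite,'x::finite,'y::finite) jdist \<Rightarrow> ('t,'x,'y) jdist set" where
  "argmax_condH P = {Q \<in> Delta_P P. \<forall>Q'\<in>Delta_P P. condH_T_given_XY Q' \<le> condH_T_given_XY Q}"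

end

theory Submission
  imports Defs
begin

lemma sum3:
  "(\<Sum>z\<in>(UNIV::('t::finite\<times>'x::finite\<times>'y::finite) set). f z) = (\<Sum>t\<in>UNIV. \<Sum>x\<in>UNIV. \<Sum>y\<in>UNIV. f (t,x,y))"
proof -
  have e1: "(\<Sum>z\<in>(UNIV::('t\<times>'x\<times>'y) set). f z) = (\<Sum>t\<in>UNIV. \<Sum>p\<in>(UNIV::('x\<times>'y) set). f (t,p))"
    using sum.cartesian_product'[of f "UNIV::'t set" "UNIV::('x\<times>'y) set"] by (simp only: UNIV_Times_UNIV)
  have e2: "(\<Sum>p\<in>(UNIV::('x\<times>'y) set). f (t,p)) = (\<Sum>x\<in>UNIV. \<Sum>y\<in>UNIV. f (t,x,y))" for t
    using sum.cartesian_product'[of "\<lambda>p. f (t,p)" "UNIV::'x set" "UNIV::'y set"] by (simp only: UNIV_Times_UNIV)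
  show ?thesis unfolding e1 e2 ..
qed

lemma pX_TX: "pX P x = (\<Sum>t\<in>UNIV. pTX P t x)"
  by (simp add: pX_def pTX_def)

lemma pX_XY: "pX P x = (\<Sum>y\<in>UNIV. pXY P x y)"
  unfolding pX_def pXY_def by (rule sum.swap)

lemma pY_XY: "pY P y = (\<Sum>x\<in>UNIV. pXY P x y)"
  unfolding pY_def pXY_def by (rule sum.swap)

lemma pY_TY: "pY P y = (\<Sum>t\<in>UNIV. pTY P t y)"
  by (simp add: pY_def pTY_def)

definition GG :: "('t::finite,'x::finite,'y::finite) jdist \<Rightarrow> real" where
  "GG Q = - (\<Sum>t\<in>UNIV. \<Sum>x\<in>UNIV. pTX Q t x * ln (pTX Q t x / pX Q x))"

lemma GG_alt: "GG Q = - (\<Sum>t\<in>UNIV. \<Sum>x\<in>UNIV. \<Sum>y\<in>UNIV. Q (t,x,y) * ln (pTX Q t x / pX Q x))"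
proof -
  have e: "pTX Q t x * r = (\<Sum>y\<in>UNIV. Q (t,x,y) * r)" for t x r
    unfolding pTX_def by (rule sum_distrib_right)
  show ?thesis unfolding GG_def e ..
qed

lemma GG_cong: assumes "\<And>t x. pTX Q t x = pTX P t x" shows "GG Q = GG P"
proof -
  have "pX Q x = pX P x" for x unfolding pX_TX using assms by simp
  then show ?thesis unfolding GG_def using assms by simp
qed

lemma condH_alt: assumes "\<forall>z. Q z \<ge> 0"
  shows "condH_T_given_XY Q = - (\<Sum>t\<in>UNIV. \<Sum>x\<in>UNIV. \<Sum>y\<in>UNIV. Q (t,x,y) * ln (Q (t,x,y) / pXY Q x y))"
proof -
  have e: "(if Q (t,x,y) > 0 then Q (t,x,y) * ln (Q (t,x,y) / pXY Q x y) else 0) = Q (t,x,y) * ln (Q (t,x,y) / pXY Q x y)" for t x y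
  proof (cases "Q (t,x,y) > 0")
    case False
    then have "Q (t,x,y) = 0" using assms[rule_format, of "(t,x,y)"] by linarith
    then show ?thesis by simp
  qed simp
  show ?thesis unfolding condH_T_given_XY_def sum3 by (simp only: split e)
qed

lemma pointwise:
  fixes q a b c :: real
  assumes "q \<ge> 0" "a \<ge> q" "b \<ge> q" "c \<ge> b"
  shows "- (q * ln (q / a)) \<le> - (q * ln (b / c)) + (a * b / c - q)"
proof (cases "q = 0")
  case True
  then show ?thesis using assms by simp
next
  case False
  then have q: "q > 0" using assms by simp
  then have pos: "a > 0" "b > 0" "c > 0" using assms by auto
  have "ln (a*b/(q*c)) \<le> a*b/(q*c) - 1" using pos q by (intro ln_le_minus_one) auto
  moreover have "ln (a*b/(q*c)) = ln (b/c) - ln (q/a)" using pos q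
    by (simp add: ln_div ln_mult)
  ultimately have "q * (ln (b/c) - ln (q/a)) \<le> q * (a*b/(q*c) - 1)"
    using q by (intro mult_left_mono) auto
  also have "q * (a*b/(q*c) - 1) = a*b/c - q" using q by (simp add: field_simps)
  finally show ?thesis by (simp add: algebra_simps)
qed

lemma bound:
  assumes "is_dist Q"
  shows "condH_T_given_XY Q \<le> GG Q"
proof -
  have nn: "\<And>z. Q z \<ge> 0" and s1: "(\<Sum>z\<in>UNIV. Q z) = 1" using assms by (auto simp: is_dist_def)
  have le1: "Q (t,x,y) \<le> pXY Q x y" for t x y
    unfolding pXY_def using nn by (intro member_le_sum) auto
  have le2: "Q (t,x,y) \<le> pTX Q t x" for t x y
    unfolding pTX_def using nn by (intro member_le_sum) auto
  have le3: "pTX Q t x \<le> pX Q x" for t x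
    unfolding pX_TX using nn by (intro member_le_sum) (auto simp: pTX_def intro: sum_nonneg)
  have "condH_T_given_XY Q \<le> (\<Sum>t\<in>UNIV. \<Sum>x\<in>UNIV. \<Sum>y\<in>UNIV.
      - (Q (t,x,y) * ln (pTX Q t x / pX Q x)) + (pXY Q x y * pTX Q t x / pX Q x - Q (t,x,y)))"
    unfolding condH_alt[OF allI[OF nn]] sum_negf[symmetric]
    by (intro sum_mono pointwise nn le1 le2 le3)
  also have "\<dots> = GG Q + (\<Sum>t\<in>UNIV. \<Sum>x\<in>UNIV. \<Sum>y\<in>UNIV. pXY Q x y * pTX Q t x / pX Q x)
        - (\<Sum>t\<in>UNIV. \<Sum>x\<in>UNIV. \<Sum>y\<in>UNIV. Q (t,x,y))"
    unfolding GG_alt by (simp add: sum.distrib sum_subtractf sum_negf)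
  also have "(\<Sum>t\<in>UNIV. \<Sum>x\<in>UNIV. \<Sum>y\<in>UNIV. Q (t,x,y)) = 1" using s1 by (simp add: sum3)
  also have "(\<Sum>t\<in>UNIV. \<Sum>x\<in>UNIV. \<Sum>y\<in>UNIV. pXY Q x y * pTX Q t x / pX Q x)
      = (\<Sum>x\<in>UNIV. \<Sum>t\<in>UNIV. \<Sum>y\<in>UNIV. pXY Q x y * pTX Q t x / pX Q x)"
    by (rule sum.swap)
  also have "\<dots> = (\<Sum>x\<in>UNIV. \<Sum>y\<in>UNIV. \<Sum>t\<in>UNIV. pXY Q x y * pTX Q t x / pX Q x)"
    by (intro sum.cong refl) (rule sum.swap)
  also have "\<dots> = (\<Sum>x\<in>UNIV. \<Sum>y\<in>UNIV. pXY Q x y * (pX Q x / pX Q x))"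
  proof (intro sum.cong refl)
    fix x y
    have "(\<Sum>t\<in>UNIV. pXY Q x y * pTX Q t x / pX Q x) = pXY Q x y * (\<Sum>t\<in>UNIV. pTX Q t x) / pX Q x"
      by (simp add: sum_distrib_left sum_divide_distrib)
    then show "(\<Sum>t\<in>UNIV. pXY Q x y * pTX Q t x / pX Q x) = pXY Q x y * (pX Q x / pX Q x)"
      by (simp add: pX_TX[of Q x, symmetric])
  qed
  also have "\<dots> \<le> (\<Sum>x\<in>UNIV. \<Sum>y\<in>UNIV. pXY Q x y)"
  proof (intro sum_mono)
    fix x y
    have "pXY Q x y \<ge> 0" unfolding pXY_def using nn by (intro sum_nonneg) auto
    moreover have "pX Q x / pX Q x \<le> 1" by (cases "pX Q x = 0") auto
    ultimately show "pXY Q x y * (pX Q x / pX Q x) \<le> pXY Q x y"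
      using mult_left_le by blast
  qed
  also have "\<dots> = (\<Sum>x\<in>UNIV. \<Sum>t\<in>UNIV. \<Sum>y\<in>UNIV. Q (t,x,y))"
    unfolding pXY_def by (intro sum.cong refl) (rule sum.swap)
  also have "\<dots> = (\<Sum>t\<in>UNIV. \<Sum>x\<in>UNIV. \<Sum>y\<in>UNIV. Q (t,x,y))"
    by (rule sum.swap)
  also have "\<dots> = 1" using s1 by (simp add: sum3)
  finally show ?thesis by simp
qed

lemma eqGG:
  assumes "is_dist Q" "cond_indep_T_Y_given_X Q"
  shows "condH_T_given_XY Q = GG Q"
proof -
  have nn: "\<And>z. Q z \<ge> 0" using assms by (auto simp: is_dist_def)
  have le1: "Q (t,x,y) \<le> pXY Q x y" for t x y
    unfolding pXY_def using nn by (intro member_le_sum) auto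
  have le2: "Q (t,x,y) \<le> pTX Q t x" for t x y
    unfolding pTX_def using nn by (intro member_le_sum) auto
  have le3: "pTX Q t x \<le> pX Q x" for t x
    unfolding pX_TX using nn by (intro member_le_sum) (auto simp: pTX_def intro: sum_nonneg)
  have ci: "Q (t,x,y) * pX Q x = pTX Q t x * pXY Q x y" for t x y
    using assms(2) by (auto simp: cond_indep_T_Y_given_X_def)
  have e: "Q (t,x,y) * ln (Q (t,x,y) / pXY Q x y) = Q (t,x,y) * ln (pTX Q t x / pX Q x)" for t x y
  proof (cases "Q (t,x,y) = 0")
    case False
    then have q: "Q (t,x,y) > 0" using nn[of "(t,x,y)"] by linarith
    then have a: "pXY Q x y > 0" and c: "pX Q x > 0" using le1[of t x y] le2[of t x y] le3[of t x] by linarith+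
    have "Q (t,x,y) / pXY Q x y = pTX Q t x / pX Q x"
      using a c ci[of t x y] by (simp add: field_simps)
    then show ?thesis by simp
  qed simp
  show ?thesis unfolding condH_alt[OF allI[OF nn]] GG_alt e ..
qed

lemma in_argmax:
  assumes "Q1 \<in> Delta_P P" "cond_indep_T_Y_given_X Q1"
  shows "Q1 \<in> argmax_condH P"
  unfolding argmax_condH_def
proof (intro CollectI conjI ballI assms(1))
  fix Q' assume Q': "Q' \<in> Delta_P P"
  have "condH_T_given_XY Q' \<le> GG Q'" using Q' by (intro bound) (simp add: Delta_P_def)
  also have "GG Q' = GG Q1" using Q' assms(1) by (intro GG_cong) (simp add: Delta_P_def)
  also have "\<dots> = condH_T_given_XY Q1" using assms by (intro eqGG[symmetric]) (auto simp: Delta_P_def)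
  finally show "condH_T_given_XY Q' \<le> condH_T_given_XY Q1" .
qed

lemma entropy_point:
  fixes p :: "'a::finite \<Rightarrow> real"
  assumes "\<And>a. a \<noteq> aa \<Longrightarrow> p a = 0" "p aa = 1"
  shows "entropy_fn p = 0"
proof -
  have "(if p a > 0 then p a * ln (p a) else 0) = 0" for a
    using assms by (cases "a = aa") auto
  then show ?thesis unfolding entropy_fn_def by simp
qed

theorem mainTheorem11:
  fixes P :: "('t::finite, 'x::finite, 'y::finite) jdist"
    and x0 :: 'x and y0 :: 'y
  assumes "is_dist P"
    and "cond_indep_T_X_given_Y P"
    and "cond_indep_T_Y_given_X P"
    and "pXY P x0 y0 > 0"
    and "condH_X_given_Y_eq P y0 \<noteq> 0"
    and "condH_Y_given_X_eq P x0 \<noteq> 0"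
  shows "\<exists>Q1 Q2. Q1 \<in> argmax_condH P \<and> Q2 \<in> argmax_condH P \<and> Q1 \<noteq> Q2"
proof -
  note dist = assms(1)
  have nn: "\<And>z. P z \<ge> 0" and s1: "(\<Sum>z\<in>UNIV. P z) = 1" using dist by (auto simp: is_dist_def)
  have ci1: "P (t,x,y) * pY P y = pTY P t y * pXY P x y" for t x y
    using assms(2) by (auto simp: cond_indep_T_X_given_Y_def)
  have ci2: "P (t,x,y) * pX P x = pTX P t x * pXY P x y" for t x y
    using assms(3) by (auto simp: cond_indep_T_Y_given_X_def)
  have xynn: "pXY P x y \<ge> 0" for x y unfolding pXY_def using nn by (intro sum_nonneg) auto
  have tynn: "pTY P t y \<ge> 0" for t y unfolding pTY_def using nn by (intro sum_nonneg) auto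
  have txnn: "pTX P t x \<ge> 0" for t x unfolding pTX_def using nn by (intro sum_nonneg) auto
  have pXge: "pXY P x y \<le> pX P x" for x y unfolding pX_XY using xynn by (intro member_le_sum) auto
  have pYge: "pXY P x y \<le> pY P y" for x y unfolding pY_XY using xynn by (intro member_le_sum) auto
  define a where "a = x0"
  define c where "c = y0"
  have ac: "pXY P a c > 0" using assms(4) by (simp add: a_def c_def)
  obtain b where ba: "b \<noteq> a" and bc: "pXY P b c > 0"
  proof (rule ccontr)
    assume "\<not> ?thesis"
    then have z: "\<And>x. x \<noteq> a \<Longrightarrow> pXY P x c = 0" using that xynn by (metis less_le)
    have "pY P c = pXY P a c + (\<Sum>x\<in>UNIV - {a}. pXY P x c)"
      unfolding pY_XY by (rule sum.remove) auto
    also have "(\<Sum>x\<in>UNIV - {a}. pXY P x c) = 0" using z by (intro sum.neutral) auto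
    finally have pyc: "pY P c = pXY P a c" by simp
    have "condH_X_given_Y_eq P y0 = 0" unfolding condH_X_given_Y_eq_def c_def[symmetric]
      by (rule entropy_point[where aa=a]) (use z pyc ac in auto)
    then show False using assms(5) by simp
  qed
  obtain d where dc: "d \<noteq> c" and ad: "pXY P a d > 0"
  proof (rule ccontr)
    assume "\<not> ?thesis"
    then have z: "\<And>y. y \<noteq> c \<Longrightarrow> pXY P a y = 0" using that xynn by (metis less_le)
    have "pX P a = pXY P a c + (\<Sum>y\<in>UNIV - {c}. pXY P a y)"
      unfolding pX_XY by (rule sum.remove) auto
    also have "(\<Sum>y\<in>UNIV - {c}. pXY P a y) = 0" using z by (intro sum.neutral) auto
    finally have pxa: "pX P a = pXY P a c" by simp
    have "condH_Y_given_X_eq P x0 = 0" unfolding condH_Y_given_X_eq_def a_def[symmetric]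
      by (rule entropy_point[where aa=c]) (use z pxa ac in auto)
    then show False using assms(6) by simp
  qed
  have pXa: "pX P a > 0" using pXge[of a c] ac by linarith
  have pXb: "pX P b > 0" using pXge[of b c] bc by linarith
  have pYc: "pY P c > 0" using pYge[of a c] ac by linarith
  have colc: "pTX P t x / pX P x = pTY P t c / pY P c" if "pXY P x c > 0" for t x
  proof -
    have px: "pX P x > 0" using pXge[of x c] that by linarith
    have "P (t,x,c) = pTX P t x / pX P x * pXY P x c" using ci2[of t x c] px by (simp add: field_simps)
    moreover have "P (t,x,c) = pTY P t c / pY P c * pXY P x c" using ci1[of t x c] pYc by (simp add: field_simps)
    ultimately have "pTX P t x / pX P x * pXY P x c = pTY P t c / pY P c * pXY P x c" by simp
    then show ?thesis using that by (metis mult_right_cancel less_irrefl)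
  qed
  define cc where "cc t = pTX P t a / pX P a" for t
  have ccnn: "cc t \<ge> 0" for t unfolding cc_def using txnn pXa by simp
  have ccb: "pTX P t b = cc t * pX P b" for t
    using colc[OF bc, of t] colc[OF ac, of t] pXb unfolding cc_def by (simp add: field_simps)
  have cca: "pTX P t a = cc t * pX P a" for t unfolding cc_def using pXa by simp
  have sumcc: "(\<Sum>t\<in>UNIV. cc t) = 1"
    unfolding cc_def sum_divide_distrib[symmetric] pX_TX[symmetric] using pXa by simp
  have Pbc: "P (t,b,c) = cc t * pXY P b c" for t using ci2[of t b c] ccb[of t] pXb
    by (simp add: field_simps)
  have Pad: "P (t,a,d) = cc t * pXY P a d" for t using ci2[of t a d] cca[of t] pXa
    by (simp add: field_simps)
  define u where "u x = (if x = a then 1 else 0) - (if x = b then 1 else (0::real))" for x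
  define v where "v y = (if y = c then 1 else 0) - (if y = d then 1 else (0::real))" for y
  have su: "(\<Sum>x\<in>UNIV. u x) = 0" unfolding u_def by (simp add: sum_subtractf)
  have sv: "(\<Sum>y\<in>UNIV. v y) = 0" unfolding v_def by (simp add: sum_subtractf)
  define e where "e = min (pXY P b c) (pXY P a d)"
  have e0: "e > 0" using bc ad by (simp add: e_def)
  define Q where "Q z = P z + e * cc (fst z) * u (fst (snd z)) * v (snd (snd z))" for z :: "'t \<times> 'x \<times> 'y"
  have Qv: "Q (t,x,y) = P (t,x,y) + e * cc t * u x * v y" for t x y by (simp add: Q_def)
  have QTX: "pTX Q t x = pTX P t x" for t x
  proof -
    have "pTX Q t x = pTX P t x + e * cc t * u x * (\<Sum>y\<in>UNIV. v y)"
      unfolding pTX_def Qv by (simp add: sum.distrib sum_distrib_left)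
    then show ?thesis using sv by simp
  qed
  have QTY: "pTY Q t y = pTY P t y" for t y
  proof -
    have "pTY Q t y = pTY P t y + e * cc t * v y * (\<Sum>x\<in>UNIV. u x)"
      unfolding pTY_def Qv by (simp add: sum.distrib sum_distrib_left sum_distrib_right mult.commute mult.left_commute)
    then show ?thesis using su by simp
  qed
  have QXY: "pXY Q x y = pXY P x y + e * u x * v y" for x y
  proof -
    have "pXY Q x y = pXY P x y + e * u x * v y * (\<Sum>t\<in>UNIV. cc t)"
      unfolding pXY_def Qv by (simp add: sum.distrib sum_distrib_left sum_distrib_right mult.commute mult.left_commute)
    then show ?thesis using sumcc by simp
  qed
  have QX: "pX Q x = pX P x" for x unfolding pX_TX QTX ..
  have Qnn: "Q z \<ge> 0" for z
  proof -
    obtain t x y where z: "z = (t,x,y)" by (cases z) auto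
    have "(x = b \<and> y = c) \<or> (x = a \<and> y = d) \<or> u x * v y \<ge> 0"
      using ba dc unfolding u_def v_def by auto
    then show ?thesis
    proof (elim disjE)
      assume h: "x = b \<and> y = c"
      then have "u x * v y = -1" using ba dc unfolding u_def v_def by auto
      then have "Q z = cc t * (pXY P b c - e)" unfolding z Qv using h Pbc[of t]
        by (simp add: algebra_simps)
      moreover have "pXY P b c - e \<ge> 0" by (simp add: e_def)
      ultimately show ?thesis using ccnn[of t] by simp
    next
      assume h: "x = a \<and> y = d"
      then have "u x * v y = -1" using ba dc unfolding u_def v_def by auto
      then have "Q z = cc t * (pXY P a d - e)" unfolding z Qv using h Pad[of t]
        by (simp add: algebra_simps)
      moreover have "pXY P a d - e \<ge> 0" by (simp add: e_def)
      ultimately show ?thesis using ccnn[of t] by simp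
    next
      assume "u x * v y \<ge> 0"
      then have "e * cc t * (u x * v y) \<ge> 0" using e0 ccnn[of t] by simp
      then show ?thesis unfolding z Qv using nn[of "(t,x,y)"] by (simp add: mult.assoc)
    qed
  qed
  have Qsum: "(\<Sum>z\<in>UNIV. Q z) = 1"
  proof -
    have "(\<Sum>z\<in>UNIV. Q z) = (\<Sum>t\<in>UNIV. \<Sum>x\<in>UNIV. pTX Q t x)" unfolding sum3 pTX_def ..
    also have "\<dots> = (\<Sum>t\<in>UNIV. \<Sum>x\<in>UNIV. pTX P t x)" unfolding QTX ..
    also have "\<dots> = (\<Sum>z\<in>UNIV. P z)" unfolding sum3 pTX_def ..
    finally show ?thesis using s1 by simp
  qed
  have QD: "Q \<in> Delta_P P" unfolding Delta_P_def is_dist_def using Qnn Qsum QTX QTY by auto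
  have PD: "P \<in> Delta_P P" unfolding Delta_P_def using dist by auto
  have key: "cc t * pX P x * u x = pTX P t x * u x" for t x
    unfolding u_def using cca[of t] ccb[of t] ba by auto
  have Qci: "cond_indep_T_Y_given_X Q"
    unfolding cond_indep_T_Y_given_X_def
  proof (intro allI)
    fix t x y
    have "Q (t,x,y) * pX Q x = P (t,x,y) * pX P x + e * v y * (cc t * pX P x * u x)"
      unfolding Qv QX by (simp add: algebra_simps)
    also have "\<dots> = pTX P t x * pXY P x y + e * v y * (pTX P t x * u x)" unfolding key ci2 ..
    also have "\<dots> = pTX Q t x * pXY Q x y" unfolding QTX QXY by (simp add: algebra_simps)
    finally show "Q (t,x,y) * pX Q x = pTX Q t x * pXY Q x y" .
  qed
  obtain t where t: "cc t \<noteq> 0" using sumcc by (metis sum.neutral zero_neq_one)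
  have "Q (t,a,c) \<noteq> P (t,a,c)" unfolding Qv using t e0 ba dc by (simp add: u_def v_def)
  then have QP: "Q \<noteq> P" by auto
  show ?thesis
    using in_argmax[OF QD Qci] in_argmax[OF PD assms(3)] QP by blast
qed

end
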